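(* Let $I=(a_1,\dots,a_n)\in(0,1]^n$ be a sorted item sequence, and let $I_1$ be the subsequence of $I$ consisting of the items that are sole class-1 items in the assignment $f$ produced by $MM_2$ on $I$. Then for every assignment $g$ of $I$ without cardinality constraints there exists an assignment $g'$ of $I$ without cardinality constraints such that $g$ and $g'$ use the same number of non-empty bins and every item of $I_1$ is a sole item in $g'$.
   Context: An item sequence $I=(a_1,\dots,a_n)\in(0,1]^n$ is sorted if $a_1\ge\cdots\ge a_n$. An assignment without cardinality constraints is a map $g:\{1,\dots,n\}\to\mathbb{N}$ with $\sum_{i:g(i)=j}a_i\le1$ for each bin $j$; $|g(I)|$ denotes its number of non-empty bins. A class-1 item is an item of size in $(\frac12,1]$; an item is sole if its bin contains no other item. Algorithm $MM_k$: sort the items in non-increasing order (an already sorted input is left unchanged); keep a single open bin with load $S$. Repeat while items remain: if the open bin already contains $k$ items, close it and open a new bin; else if the head (largest remaining) item fits ($S+\text{head}\le1$) pack it; else if the tail (smallest remaining) item fits pack it; else close the open bin permanently and open a new empty bin. $MM_2$ is the case $k=2$. *)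

theory Defs
  imports Complex_Main
begin

text \<open>Items are given as a list a of reals; item i (i < length a) has size a ! i.
  Assignments are maps g :: nat \<Rightarrow> nat from item indices to bin numbers.\<close>

definition sorted_items :: "real list \<Rightarrow> bool" where
  "sorted_items a \<longleftrightarrow> sorted_wrt (\<ge>) a \<and> (\<forall>x\<in>set a. 0 < x \<and> x \<le> 1)"

definition is_assignment :: "real list \<Rightarrow> (nat \<Rightarrow> nat) \<Rightarrow> bool" where
  "is_assignment a g \<longleftrightarrow> (\<forall>j. (\<Sum>i\<in>{i. i < length a \<and> g i = j}. a ! i) \<le> 1)"

definition num_bins :: "real list \<Rightarrow> (nat \<Rightarrow> nat) \<Rightarrow> nat" where
  "num_bins a g = card (g ` {..<length a})"

definition sole :: "real list \<Rightarrow> (nat \<Rightarrow> nat) \<Rightarrow> nat \<Rightarrow> bool" where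
  "sole a g i \<longleftrightarrow> (\<forall>i'<length a. i' \<noteq> i \<longrightarrow> g i' \<noteq> g i)"

definition class1 :: "real list \<Rightarrow> nat \<Rightarrow> bool" where
  "class1 a i \<longleftrightarrow> a ! i > 1/2"

text \<open>State: remaining item indices rem
  (head = largest, last = smallest), current open bin b, its load S, its item count c,
  and the assignment built so far.  The final stuck branch (empty bin, nothing fits) is
  unreachable for items of size at most 1.\<close>

function mm_run :: "nat \<Rightarrow> real list \<Rightarrow> nat list \<Rightarrow> nat \<Rightarrow> real \<Rightarrow> nat \<Rightarrow> (nat \<Rightarrow> nat) \<Rightarrow> (nat \<Rightarrow> nat)" where
  "mm_run k a [] b S c f = f"
| "mm_run k a (h # rest) b S c f =
     (if k \<le> c \<and> 0 < c then mm_run k a (h # rest) (Suc b) 0 0 f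
      else if S + a ! h \<le> 1 then mm_run k a rest b (S + a ! h) (Suc c) (f(h := b))
      else if S + a ! last (h # rest) \<le> 1
        then mm_run k a (butlast (h # rest)) b (S + a ! last (h # rest)) (Suc c) (f(last (h # rest) := b))
      else if 0 < c then mm_run k a (h # rest) (Suc b) 0 0 f
      else f)"
  by pat_completeness auto
termination
  by (relation "measure (\<lambda>(k, a, rem, b, S, c, f). 2 * length rem + (if 0 < c then 1 else 0))") auto

definition MM :: "nat \<Rightarrow> real list \<Rightarrow> (nat \<Rightarrow> nat)" where
  "MM k a = mm_run k a [0..<length a] 0 0 0 (\<lambda>_. 0)"

end

theory Submission
  imports Defs
begin


definition Aset :: "nat \<Rightarrow> nat \<Rightarrow> nat \<Rightarrow> nat set" where
  "Aset n lo hi = {i. i < n \<and> (i < lo \<or> hi \<le> i)}"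

definition mminv :: "real list \<Rightarrow> nat \<Rightarrow> nat \<Rightarrow> nat \<Rightarrow> real \<Rightarrow> nat \<Rightarrow> (nat \<Rightarrow> nat) \<Rightarrow> bool" where
"mminv a lo hi b S c f \<longleftrightarrow> lo \<le> hi \<and> hi \<le> length a \<and>
 (\<forall>i\<in>Aset (length a) lo hi. f i \<le> b) \<and>
 c = card {i\<in>Aset (length a) lo hi. f i = b} \<and>
 S = (\<Sum>i\<in>{i\<in>Aset (length a) lo hi. f i = b}. a!i) \<and>
 (\<forall>j. (\<Sum>i\<in>{i\<in>Aset (length a) lo hi. f i = j}. a!i) \<le> 1) \<and>
 (\<forall>u\<in>Aset (length a) lo hi. \<exists>h\<in>Aset (length a) lo hi. f h = f u \<and>
    (\<forall>v<length a. ((lo \<le> v \<and> v < hi) \<or> (v \<in> Aset (length a) lo hi \<and> f u < f v)) \<longrightarrow> h \<le> v)) \<and>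
 (\<forall>i\<in>Aset (length a) lo hi. class1 a i \<and> f i < b \<and> (\<forall>i'\<in>Aset (length a) lo hi. i' \<noteq> i \<longrightarrow> f i' \<noteq> f i) \<longrightarrow>
    (\<forall>u<length a. a!u \<le> 1 - a!i \<longrightarrow> u \<in> Aset (length a) lo hi \<and>
        (\<exists>h\<in>Aset (length a) lo hi. f h = f u \<and> a!i \<le> a!h \<and> h \<noteq> u)))"

lemma mminvD:
  assumes "mminv a lo hi b S c f"
  shows mminv_lohi: "lo \<le> hi" "hi \<le> length a"
  and mminv_J4: "\<And>i. i\<in>Aset (length a) lo hi \<Longrightarrow> f i \<le> b"
  and mminv_J7: "c = card {i\<in>Aset (length a) lo hi. f i = b}"
  and mminv_J3: "S = (\<Sum>i\<in>{i\<in>Aset (length a) lo hi. f i = b}. a!i)"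
  and mminv_J5: "\<And>j. (\<Sum>i\<in>{i\<in>Aset (length a) lo hi. f i = j}. a!i) \<le> 1"
  and mminv_J8: "\<And>u. u\<in>Aset (length a) lo hi \<Longrightarrow> \<exists>h\<in>Aset (length a) lo hi. f h = f u \<and>
    (\<forall>v<length a. ((lo \<le> v \<and> v < hi) \<or> (v \<in> Aset (length a) lo hi \<and> f u < f v)) \<longrightarrow> h \<le> v)"
  and mminv_J6: "\<And>i. i\<in>Aset (length a) lo hi \<Longrightarrow> class1 a i \<Longrightarrow> f i < b \<Longrightarrow> (\<forall>i'\<in>Aset (length a) lo hi. i' \<noteq> i \<longrightarrow> f i' \<noteq> f i) \<Longrightarrow>
    (\<forall>u<length a. a!u \<le> 1 - a!i \<longrightarrow> u \<in> Aset (length a) lo hi \<and>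
        (\<exists>h\<in>Aset (length a) lo hi. f h = f u \<and> a!i \<le> a!h \<and> h \<noteq> u))"
  using assms unfolding mminv_def by blast+

lemma mminvI:
  assumes "lo \<le> hi" "hi \<le> length a"
  and "\<And>i. i\<in>Aset (length a) lo hi \<Longrightarrow> f i \<le> b"
  and "c = card {i\<in>Aset (length a) lo hi. f i = b}"
  and "S = (\<Sum>i\<in>{i\<in>Aset (length a) lo hi. f i = b}. a!i)"
  and "\<And>j. (\<Sum>i\<in>{i\<in>Aset (length a) lo hi. f i = j}. a!i) \<le> 1"
  and "\<And>u. u\<in>Aset (length a) lo hi \<Longrightarrow> \<exists>h\<in>Aset (length a) lo hi. f h = f u \<and>
    (\<forall>v<length a. ((lo \<le> v \<and> v < hi) \<or> (v \<in> Aset (length a) lo hi \<and> f u < f v)) \<longrightarrow> h \<le> v)"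
  and "\<And>i. i\<in>Aset (length a) lo hi \<Longrightarrow> class1 a i \<Longrightarrow> f i < b \<Longrightarrow> (\<forall>i'\<in>Aset (length a) lo hi. i' \<noteq> i \<longrightarrow> f i' \<noteq> f i) \<Longrightarrow>
    (\<forall>u<length a. a!u \<le> 1 - a!i \<longrightarrow> u \<in> Aset (length a) lo hi \<and>
        (\<exists>h\<in>Aset (length a) lo hi. f h = f u \<and> a!i \<le> a!h \<and> h \<noteq> u))"
  shows "mminv a lo hi b S c f"
  using assms unfolding mminv_def by blast

lemma sorted_le:
  assumes "sorted_items a" "i \<le> j" "j < length a"
  shows "a!j \<le> a!i"
proof (cases "i = j")
  case False
  then have "i < j" using assms by simp
  then show ?thesis using assms sorted_wrt_nth_less[of "(\<ge>)" a i j]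
    unfolding sorted_items_def by auto
qed simp

lemma item_pos:
  assumes "sorted_items a" "i < length a"
  shows "0 < a!i" "a!i \<le> 1"
  using assms unfolding sorted_items_def by (auto simp: nth_mem)

lemma sole_close:
  assumes inv: "mminv a lo hi b S c f" and srt: "sorted_items a"
    and iA: "i \<in> Aset (length a) lo hi" and c1: "class1 a i" and fi: "f i = b"
    and sl: "\<forall>i'\<in>Aset (length a) lo hi. i' \<noteq> i \<longrightarrow> f i' \<noteq> f i"
    and big: "\<forall>v. lo \<le> v \<and> v < hi \<longrightarrow> a!v > 1 - a!i"
  shows "\<forall>u<length a. a!u \<le> 1 - a!i \<longrightarrow> u \<in> Aset (length a) lo hi \<and>
        (\<exists>h\<in>Aset (length a) lo hi. f h = f u \<and> a!i \<le> a!h \<and> h \<noteq> u)"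
proof (intro allI impI)
  fix u assume u: "u < length a" "a!u \<le> 1 - a!i"
  have half: "a!i > 1/2" using c1 unfolding class1_def by simp
  have "\<not> (lo \<le> u \<and> u < hi)" using u big by force
  then have uA: "u \<in> Aset (length a) lo hi" using u unfolding Aset_def by auto
  have "u \<noteq> i" using u half by auto
  then have "f u \<noteq> b" using sl uA fi by auto
  moreover have "f u \<le> b" using inv uA unfolding mminv_def by blast
  ultimately have fu: "f u < f i" using fi by simp
  obtain h where hA: "h \<in> Aset (length a) lo hi" and fh: "f h = f u"
    and hv: "\<forall>v<length a. ((lo \<le> v \<and> v < hi) \<or> (v \<in> Aset (length a) lo hi \<and> f u < f v)) \<longrightarrow> h \<le> v"
    using inv uA unfolding mminv_def by meson
  have il: "i < length a" using iA unfolding Aset_def by simp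
  have "h \<le> i" using hv il iA fu by blast
  then have ai: "a!i \<le> a!h" using sorted_le[OF srt _ il] by simp
  have "h \<noteq> u" using ai u half by auto
  show "u \<in> Aset (length a) lo hi \<and> (\<exists>h\<in>Aset (length a) lo hi. f h = f u \<and> a!i \<le> a!h \<and> h \<noteq> u)"
    using uA hA fh ai \<open>h \<noteq> u\<close> by blast
qed

lemma Aset_fin: "finite {i\<in>Aset n lo hi. P i}"
  unfolding Aset_def by auto

lemma L_init: "mminv a 0 (length a) 0 0 0 (\<lambda>_. 0)"
proof -
  have e: "Aset (length a) 0 (length a) = {}" unfolding Aset_def by auto
  show ?thesis unfolding mminv_def e by auto
qed

lemma L_close:
  assumes inv: "mminv a lo hi b S c f"
    and H: "\<And>i. i\<in>Aset (length a) lo hi \<Longrightarrow> class1 a i \<Longrightarrow> f i = b \<Longrightarrow> (\<forall>i'\<in>Aset (length a) lo hi. i' \<noteq> i \<longrightarrow> f i' \<noteq> f i) \<Longrightarrow>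
    (\<forall>u<length a. a!u \<le> 1 - a!i \<longrightarrow> u \<in> Aset (length a) lo hi \<and>
        (\<exists>h\<in>Aset (length a) lo hi. f h = f u \<and> a!i \<le> a!h \<and> h \<noteq> u))"
  shows "mminv a lo hi (Suc b) 0 0 f"
proof -
  note J4 = mminv_J4[OF inv]
  have e: "{i\<in>Aset (length a) lo hi. f i = Suc b} = {}" using J4 by fastforce
  show ?thesis
  proof (rule mminvI)
    show "lo \<le> hi" "hi \<le> length a" using mminv_lohi[OF inv] by auto
    show "\<And>i. i \<in> Aset (length a) lo hi \<Longrightarrow> f i \<le> Suc b" using J4 le_SucI by blast
    show "0 = card {i \<in> Aset (length a) lo hi. f i = Suc b}" unfolding e by simp
    show "0 = (\<Sum>i\<in>{i \<in> Aset (length a) lo hi. f i = Suc b}. a ! i)" unfolding e by simp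
    show "\<And>j. (\<Sum>i\<in>{i \<in> Aset (length a) lo hi. f i = j}. a ! i) \<le> 1" by (rule mminv_J5[OF inv])
    show "\<And>u. u\<in>Aset (length a) lo hi \<Longrightarrow> \<exists>h\<in>Aset (length a) lo hi. f h = f u \<and>
    (\<forall>v<length a. ((lo \<le> v \<and> v < hi) \<or> (v \<in> Aset (length a) lo hi \<and> f u < f v)) \<longrightarrow> h \<le> v)"
      by (rule mminv_J8[OF inv])
    fix i assume i: "i\<in>Aset (length a) lo hi" "class1 a i" "f i < Suc b"
      "\<forall>i'\<in>Aset (length a) lo hi. i' \<noteq> i \<longrightarrow> f i' \<noteq> f i"
    show "\<forall>u<length a. a!u \<le> 1 - a!i \<longrightarrow> u \<in> Aset (length a) lo hi \<and>
        (\<exists>h\<in>Aset (length a) lo hi. f h = f u \<and> a!i \<le> a!h \<and> h \<noteq> u)"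
    proof (cases "f i = b")
      case True then show ?thesis using H i by blast
    next
      case False then have "f i < b" using i by simp
      then show ?thesis using mminv_J6[OF inv] i by blast
    qed
  qed
qed

definition mmgood :: "real list \<Rightarrow> (nat \<Rightarrow> nat) \<Rightarrow> bool" where
  "mmgood a f \<longleftrightarrow> is_assignment a f \<and> (\<forall>i<length a. class1 a i \<and> sole a f i \<longrightarrow>
     (\<forall>u<length a. a!u \<le> 1 - a!i \<longrightarrow> (\<exists>h<length a. f h = f u \<and> a!i \<le> a!h \<and> h \<noteq> u)))"

lemma L_final:
  assumes inv: "mminv a lo hi b S c f" and srt: "sorted_items a" and e: "hi \<le> lo"
  shows "mmgood a f"
proof -
  have A: "Aset (length a) lo hi = {..<length a}" using e unfolding Aset_def by auto
  note J5 = mminv_J5[OF inv]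
  have "\<And>j. {i\<in>Aset (length a) lo hi. f i = j} = {i. i < length a \<and> f i = j}" using A by auto
  then have asg: "is_assignment a f" using J5 unfolding is_assignment_def by simp
  have "\<forall>u<length a. a!u \<le> 1 - a!i \<longrightarrow> (\<exists>h<length a. f h = f u \<and> a!i \<le> a!h \<and> h \<noteq> u)"
    if i: "i < length a" "class1 a i" "sole a f i" for i
  proof -
    have sl: "\<forall>i'\<in>Aset (length a) lo hi. i' \<noteq> i \<longrightarrow> f i' \<noteq> f i" using i(3) A unfolding sole_def by auto
    have iA: "i \<in> Aset (length a) lo hi" using A i by auto
    have "f i \<le> b" using mminv_J4[OF inv iA] .
    then consider "f i < b" | "f i = b" by linarith
    then have "\<forall>u<length a. a!u \<le> 1 - a!i \<longrightarrow> u \<in> Aset (length a) lo hi \<and>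
        (\<exists>h\<in>Aset (length a) lo hi. f h = f u \<and> a!i \<le> a!h \<and> h \<noteq> u)"
    proof cases
      case 1
      then show ?thesis using mminv_J6[OF inv iA i(2) _ sl] by blast
    next
      case 2
      show ?thesis by (rule sole_close[OF inv srt iA i(2) 2 sl]) (use e in auto)
    qed
    then show ?thesis using A by auto
  qed
  then show ?thesis unfolding mmgood_def using asg by blast
qed



lemma L_assign:
  assumes inv: "mminv a lo hi b S c f"
    and lh': "lo' \<le> hi'" "hi' \<le> length a"
    and x: "lo \<le> x" "x < hi"
    and A': "Aset (length a) lo' hi' = insert x (Aset (length a) lo hi)"
    and sub: "\<And>v. lo' \<le> v \<Longrightarrow> v < hi' \<Longrightarrow> lo \<le> v \<and> v < hi"
    and fit: "S + a!x \<le> 1"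
    and cx: "0 < c \<or> (\<forall>v. lo' \<le> v \<and> v < hi' \<longrightarrow> x \<le> v)"
  shows "mminv a lo' hi' b (S + a!x) (Suc c) (f(x:=b))"
proof -
  define A where "A = Aset (length a) lo hi"
  define f' where "f' = f(x:=b)"
  have xn: "x < length a" using x mminv_lohi[OF inv] by simp
  have xA: "x \<notin> A" using x unfolding A_def Aset_def by auto
  have finA: "finite A" unfolding A_def Aset_def by auto
  have f'A: "\<And>i. i \<in> A \<Longrightarrow> f' i = f i" using xA unfolding f'_def by auto
  have setj: "{i\<in>insert x A. f' i = j} = (if j = b then insert x {i\<in>A. f i = j} else {i\<in>A. f i = j})" for j
    using f'A xA unfolding f'_def by auto
  note J4 = mminv_J4[OF inv, folded A_def]
  note J7 = mminv_J7[OF inv, folded A_def]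
  note J3 = mminv_J3[OF inv, folded A_def]
  note J5 = mminv_J5[OF inv, folded A_def]
  note J8 = mminv_J8[OF inv, folded A_def]
  note J6 = mminv_J6[OF inv, folded A_def]
  have fin: "finite {i\<in>A. f i = j}" for j using finA by auto
  show ?thesis unfolding f'_def[symmetric]
  proof (rule mminvI, unfold A' A_def[symmetric])
    show "lo' \<le> hi'" "hi' \<le> length a" by (rule lh')+
    show "\<And>i. i \<in> insert x A \<Longrightarrow> f' i \<le> b" using J4 f'A unfolding f'_def by auto
    show "Suc c = card {i \<in> insert x A. f' i = b}" unfolding setj using J7 fin xA by simp
    show "S + a!x = (\<Sum>i\<in>{i \<in> insert x A. f' i = b}. a ! i)" unfolding setj using J3 fin xA by simp
    show "(\<Sum>i\<in>{i \<in> insert x A. f' i = j}. a ! i) \<le> 1" for j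
    proof (cases "j = b")
      case True then show ?thesis unfolding setj using J3 fin xA fit by simp
    next
      case False then show ?thesis unfolding setj using J5 by simp
    qed
    show "\<exists>h\<in>insert x A. f' h = f' u \<and>
      (\<forall>v<length a. ((lo' \<le> v \<and> v < hi') \<or> (v \<in> insert x A \<and> f' u < f' v)) \<longrightarrow> h \<le> v)"
      if u: "u \<in> insert x A" for u
    proof (cases "u = x")
      case True
      show ?thesis
      proof (cases "\<exists>w\<in>A. f w = b")
        case True
        then obtain w where w: "w \<in> A" "f w = b" by blast
        obtain h where h: "h \<in> A" "f h = f w"
          "\<forall>v<length a. ((lo \<le> v \<and> v < hi) \<or> (v \<in> A \<and> f w < f v)) \<longrightarrow> h \<le> v"
          using J8[OF w(1)] by blast
        have "\<forall>v<length a. ((lo' \<le> v \<and> v < hi') \<or> (v \<in> insert x A \<and> f' u < f' v)) \<longrightarrow> h \<le> v"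
        proof (intro allI impI)
          fix v assume v: "v < length a" "(lo' \<le> v \<and> v < hi') \<or> (v \<in> insert x A \<and> f' u < f' v)"
          have "f' v \<le> b" if "v \<in> insert x A" using J4 f'A that unfolding f'_def by auto
          then have "lo' \<le> v \<and> v < hi'" using v \<open>u = x\<close> unfolding f'_def by auto
          then show "h \<le> v" using sub h(3) v(1) by blast
        qed
        moreover have "f' h = f' u" using f'A[OF h(1)] h(2) w(2) \<open>u = x\<close> unfolding f'_def by simp
        ultimately show ?thesis using h(1) by blast
      next
        case False
        then have e0: "{i\<in>A. f i = b} = {}" by auto
        have "c = 0" unfolding J7 e0 by simp
        then have cx': "\<forall>v. lo' \<le> v \<and> v < hi' \<longrightarrow> x \<le> v" using cx by simp
        have "\<forall>v<length a. ((lo' \<le> v \<and> v < hi') \<or> (v \<in> insert x A \<and> f' u < f' v)) \<longrightarrow> x \<le> v"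
        proof (intro allI impI)
          fix v assume v: "v < length a" "(lo' \<le> v \<and> v < hi') \<or> (v \<in> insert x A \<and> f' u < f' v)"
          have "f' v \<le> b" if "v \<in> insert x A" using J4 f'A that unfolding f'_def by auto
          then have "lo' \<le> v \<and> v < hi'" using v \<open>u = x\<close> unfolding f'_def by auto
          then show "x \<le> v" using cx' by blast
        qed
        then show ?thesis using \<open>u = x\<close> by blast
      qed
    next
      case False
      then have uA: "u \<in> A" using u by simp
      obtain h where h: "h \<in> A" "f h = f u"
          "\<forall>v<length a. ((lo \<le> v \<and> v < hi) \<or> (v \<in> A \<and> f u < f v)) \<longrightarrow> h \<le> v"
          using J8[OF uA] by blast
      have "\<forall>v<length a. ((lo' \<le> v \<and> v < hi') \<or> (v \<in> insert x A \<and> f' u < f' v)) \<longrightarrow> h \<le> v"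
      proof (intro allI impI)
        fix v assume v: "v < length a" "(lo' \<le> v \<and> v < hi') \<or> (v \<in> insert x A \<and> f' u < f' v)"
        then consider "lo' \<le> v \<and> v < hi'" | "v = x" | "v \<in> A \<and> f u < f v"
          using f'A uA by auto
        then show "h \<le> v"
        proof cases
          case 1 then show ?thesis using sub h(3) v(1) by blast
        next
          case 2 then show ?thesis using x h(3) v(1) by blast
        next
          case 3 then show ?thesis using h(3) v(1) by blast
        qed
      qed
      moreover have "f' h = f' u" using f'A[OF h(1)] f'A[OF uA] h(2) by simp
      ultimately show ?thesis using h(1) by blast
    qed
    fix i assume i: "i \<in> insert x A" "class1 a i" "f' i < b"
      "\<forall>i'\<in>insert x A. i' \<noteq> i \<longrightarrow> f' i' \<noteq> f' i"
    have ix: "i \<noteq> x" using i(3) unfolding f'_def by auto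
    then have iA: "i \<in> A" using i(1) by simp
    have fi: "f i < b" using i(3) f'A[OF iA] by simp
    have sl: "\<forall>i'\<in>A. i' \<noteq> i \<longrightarrow> f i' \<noteq> f i" using i(4) f'A iA by auto
    have C: "\<forall>u<length a. a!u \<le> 1 - a!i \<longrightarrow> u \<in> A \<and>
        (\<exists>h\<in>A. f h = f u \<and> a!i \<le> a!h \<and> h \<noteq> u)" using J6[OF iA i(2) fi sl] .
    show "\<forall>u<length a. a!u \<le> 1 - a!i \<longrightarrow> u \<in> insert x A \<and>
        (\<exists>h\<in>insert x A. f' h = f' u \<and> a!i \<le> a!h \<and> h \<noteq> u)"
    proof (intro allI impI)
      fix u assume u: "u < length a" "a!u \<le> 1 - a!i"
      then obtain h where "u \<in> A" "h \<in> A" "f h = f u" "a!i \<le> a!h" "h \<noteq> u" using C by blast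
      then show "u \<in> insert x A \<and> (\<exists>h\<in>insert x A. f' h = f' u \<and> a!i \<le> a!h \<and> h \<noteq> u)"
        using f'A by auto
    qed
  qed
qed



lemma c0_S0:
  assumes inv: "mminv a lo hi b S c f" and "c = 0"
  shows "S = 0"
proof -
  have "finite {i\<in>Aset (length a) lo hi. f i = b}" by (rule Aset_fin)
  then have e: "{i\<in>Aset (length a) lo hi. f i = b} = {}" using mminv_J7[OF inv] assms(2) by simp
  show ?thesis unfolding mminv_J3[OF inv] e by simp
qed

lemma run_good:
  assumes "mminv a lo hi b S c f" "sorted_items a" "rem = [lo..<hi]" "2 \<le> k"
  shows "mmgood a (mm_run k a rem b S c f)"
  using assms
proof (induction k a rem b S c f arbitrary: lo hi rule: mm_run.induct)
  case (1 k a b S c f)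
  then have "[lo..<hi] = []" by simp
  then have "hi \<le> lo" by auto
  then show ?case using L_final[OF "1.prems"(1,2)] by simp
next
  case (2 k a h rest b S c f)
  note inv = "2.prems"(1)
  note srt = "2.prems"(2)
  have lohi: "lo < hi"
  proof (rule ccontr)
    assume "\<not> lo < hi"
    then have "[lo..<hi] = []" by simp
    then show False using "2.prems"(3) by (metis list.distinct(1))
  qed
  have hl: "h = lo" and rest: "rest = [Suc lo..<hi]" using "2.prems"(3) upt_conv_Cons[OF lohi] by auto
  have hin: "hi \<le> length a" using mminv_lohi[OF inv] by simp
  have lst: "last (h # rest) = hi - 1" using "2.prems"(3) lohi by simp
  obtain m where m: "hi = Suc m" using lohi by (cases hi) auto
  have e: "h # rest = [lo..<m] @ [m]" using "2.prems"(3) m lohi by simp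
  have bl: "butlast (h # rest) = [lo..<hi - 1]" unfolding e using m by simp
  show ?case
  proof (cases "k \<le> c \<and> 0 < c")
    case True
    have inv': "mminv a lo hi (Suc b) 0 0 f"
    proof (rule L_close[OF inv])
      fix i assume i: "i \<in> Aset (length a) lo hi" "class1 a i" "f i = b"
        "\<forall>i'\<in>Aset (length a) lo hi. i' \<noteq> i \<longrightarrow> f i' \<noteq> f i"
      have "{j\<in>Aset (length a) lo hi. f j = b} = {i}" using i by auto
      then have "c = 1" using mminv_J7[OF inv] by simp
      then show "\<forall>u<length a. a!u \<le> 1 - a!i \<longrightarrow> u \<in> Aset (length a) lo hi \<and>
        (\<exists>h\<in>Aset (length a) lo hi. f h = f u \<and> a!i \<le> a!h \<and> h \<noteq> u)"
        using True "2.prems"(4) by simp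
    qed
    show ?thesis by (subst mm_run.simps(2), subst if_P[OF True]) (rule "2.IH"(1)[OF True inv' srt "2.prems"(3,4)])
  next
    case nc: False
    show ?thesis
    proof (cases "S + a!h \<le> 1")
      case True
      have inv': "mminv a (Suc lo) hi b (S + a!lo) (Suc c) (f(lo:=b))"
      proof (rule L_assign[OF inv])
        show "Suc lo \<le> hi" "hi \<le> length a" "lo \<le> lo" "lo < hi" using lohi hin by auto
        show "Aset (length a) (Suc lo) hi = insert lo (Aset (length a) lo hi)"
          using lohi hin unfolding Aset_def by auto
        show "S + a!lo \<le> 1" using True hl by simp
      qed auto
      have inv'': "mminv a (Suc lo) hi b (S + a!h) (Suc c) (f(h:=b))" using inv' hl by simp
      show ?thesis by (subst mm_run.simps(2), subst if_not_P[OF nc], subst if_P[OF True]) (rule "2.IH"(2)[OF nc True inv'' srt rest "2.prems"(4)])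
    next
      case nh: False
      have cpos: "0 < c"
      proof (rule ccontr)
        assume "\<not> 0 < c"
        then have "S = 0" using c0_S0[OF inv] by simp
        moreover have "a!lo \<le> 1" using item_pos[OF srt] lohi hin by simp
        ultimately show False using nh hl by simp
      qed
      show ?thesis
      proof (cases "S + a ! last (h # rest) \<le> 1")
        case True
        have inv': "mminv a lo (hi - 1) b (S + a!(hi - 1)) (Suc c) (f(hi - 1:=b))"
        proof (rule L_assign[OF inv])
          show "lo \<le> hi - 1" "hi - 1 \<le> length a" "lo \<le> hi - 1" "hi - 1 < hi" using lohi hin by auto
          show "Aset (length a) lo (hi - 1) = insert (hi - 1) (Aset (length a) lo hi)"
            using lohi hin unfolding Aset_def by auto
          show "S + a!(hi - 1) \<le> 1" using True lst by simp
          show "0 < c \<or> (\<forall>v. lo \<le> v \<and> v < hi - 1 \<longrightarrow> hi - 1 \<le> v)" using cpos by simp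
        qed auto
        have inv'': "mminv a lo (hi - 1) b (S + a ! last (h # rest)) (Suc c) (f(last (h # rest):=b))" using inv' lst by simp
        show ?thesis by (subst mm_run.simps(2), subst if_not_P[OF nc], subst if_not_P[OF nh], subst if_P[OF True]) (rule "2.IH"(3)[OF nc nh True inv'' srt bl "2.prems"(4)])
      next
        case nt: False
        have inv': "mminv a lo hi (Suc b) 0 0 f"
        proof (rule L_close[OF inv])
          fix i assume i: "i \<in> Aset (length a) lo hi" "class1 a i" "f i = b"
            "\<forall>i'\<in>Aset (length a) lo hi. i' \<noteq> i \<longrightarrow> f i' \<noteq> f i"
          have "{j\<in>Aset (length a) lo hi. f j = b} = {i}" using i by auto
          then have Si: "S = a!i" using mminv_J3[OF inv] by simp
          have big: "\<forall>v. lo \<le> v \<and> v < hi \<longrightarrow> a!v > 1 - a!i"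
          proof (intro allI impI)
            fix v assume v: "lo \<le> v \<and> v < hi"
            have "v \<le> hi - 1" "hi - 1 < length a" using v hin by auto
            then have "a!(hi - 1) \<le> a!v" using sorted_le[OF srt, of v "hi - 1"] by simp
            then show "a!v > 1 - a!i" using nt lst Si by simp
          qed
          show "\<forall>u<length a. a!u \<le> 1 - a!i \<longrightarrow> u \<in> Aset (length a) lo hi \<and>
            (\<exists>h\<in>Aset (length a) lo hi. f h = f u \<and> a!i \<le> a!h \<and> h \<noteq> u)"
            by (rule sole_close[OF inv srt i big])
        qed
        show ?thesis by (subst mm_run.simps(2), subst if_not_P[OF nc], subst if_not_P[OF nh], subst if_not_P[OF nt], subst if_P[OF cpos]) (rule "2.IH"(4)[OF nc nh nt cpos inv' srt "2.prems"(3,4)])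
      qed
    qed
  qed
qed

lemma MM_good: "sorted_items a \<Longrightarrow> mmgood a (MM 2 a)"
  unfolding MM_def by (rule run_good[OF L_init]) auto



lemma pair_le:
  assumes srt: "sorted_items a" and g: "is_assignment a g"
    and xy: "x < length a" "y < length a" "x \<noteq> y" "g x = g y"
  shows "a!x + a!y \<le> 1"
proof -
  have fin: "finite {i. i < length a \<and> g i = g x}" by auto
  have sub: "{x, y} \<subseteq> {i. i < length a \<and> g i = g x}" using xy by auto
  have nn: "\<forall>i\<in>{i. i < length a \<and> g i = g x}. 0 \<le> a!i" using item_pos[OF srt] by (auto intro: less_imp_le)
  have "(\<Sum>i\<in>{x,y}. a!i) \<le> (\<Sum>i\<in>{i. i < length a \<and> g i = g x}. a!i)"
    using sum_mono2[OF fin sub] nn by blast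
  also have "\<dots> \<le> 1" using g unfolding is_assignment_def by blast
  finally show ?thesis using xy(3) by simp
qed

lemma sum_sub_le:
  assumes srt: "sorted_items a" and sub: "{i. i < length a \<and> P i} \<subseteq> {i. i < length a \<and> Q i}"
    and le: "(\<Sum>i\<in>{i. i < length a \<and> Q i}. a!i) \<le> 1"
  shows "(\<Sum>i\<in>{i. i < length a \<and> P i}. a!i) \<le> 1"
proof -
  have fin: "finite {i. i < length a \<and> Q i}" by auto
  have nn: "\<forall>i\<in>{i. i < length a \<and> Q i}. 0 \<le> a!i" using item_pos[OF srt] by (auto intro: less_imp_le)
  have "(\<Sum>i\<in>{i. i < length a \<and> P i}. a!i) \<le> (\<Sum>i\<in>{i. i < length a \<and> Q i}. a!i)"
    using sum_mono2[OF fin sub] nn by blast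
  then show ?thesis using le by simp
qed

theorem lemma2:
  fixes a :: "real list" and g :: "nat \<Rightarrow> nat"
  assumes "sorted_items a"
    and "is_assignment a g"
  shows "\<exists>g'. is_assignment a g' \<and> num_bins a g' = num_bins a g \<and>
           (\<forall>i<length a. class1 a i \<and> sole a (MM 2 a) i \<longrightarrow> sole a g' i)"
proof -
  note srt = assms(1) and gA = assms(2)
  define n where "n = length a"
  define f where "f = MM 2 a"
  have good: "mmgood a f" unfolding f_def by (rule MM_good[OF srt])
  define SC where "SC = {i. i < n \<and> class1 a i \<and> sole a f i}"
  show ?thesis
  proof (cases "SC = {}")
    case True
    then show ?thesis using gA unfolding SC_def f_def n_def by blast
  next
    case False
    have finSC: "finite SC" unfolding SC_def by auto
    define r where "r = Min ((!) a ` SC)"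
    have "r \<in> (!) a ` SC" unfolding r_def using finSC False by (intro Min_in) auto
    then obtain m where mSC: "m \<in> SC" and rm: "r = a!m" by blast
    have mmin: "\<And>i. i \<in> SC \<Longrightarrow> a!m \<le> a!i" unfolding rm[symmetric] r_def using finSC by auto
    have mn: "m < n" and mc: "class1 a m" and ms: "sole a f m" using mSC unfolding SC_def by auto
    have half: "a!m > 1/2" using mc unfolding class1_def by simp
    define L where "L = {l. l < n \<and> a!m \<le> a!l}"
    define U where "U = {u. u < n \<and> u \<notin> L \<and> (\<exists>l\<in>L. g u = g l)}"
    have Ldist: "\<And>l1 l2. l1 \<in> L \<Longrightarrow> l2 \<in> L \<Longrightarrow> g l1 = g l2 \<Longrightarrow> l1 = l2"
    proof (rule ccontr)
      fix l1 l2 assume l: "l1 \<in> L" "l2 \<in> L" "g l1 = g l2" "l1 \<noteq> l2"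
      have "a!l1 + a!l2 \<le> 1" using pair_le[OF srt gA, of l1 l2] l unfolding L_def n_def by auto
      then show False using l half unfolding L_def by auto
    qed
    have Uex: "\<exists>h. h < n \<and> f h = f u \<and> h \<in> L" if u: "u \<in> U" for u
    proof -
      obtain l where l: "l \<in> L" "g u = g l" and un: "u < n" "u \<notin> L" using u unfolding U_def by blast
      have "u \<noteq> l" using l un by auto
      then have "a!u + a!l \<le> 1" using pair_le[OF srt gA, of u l] l un unfolding L_def n_def by auto
      then have "a!u \<le> 1 - a!m" using l unfolding L_def by auto
      then obtain h where "h < n" "f h = f u" "a!m \<le> a!h" "h \<noteq> u"
        using good mn mc ms un unfolding mmgood_def n_def by blast
      then show ?thesis unfolding L_def by blast
    qed
    define p where "p u = (SOME h. h < n \<and> f h = f u \<and> h \<in> L)" for u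
    have pU: "p u < n \<and> f (p u) = f u \<and> p u \<in> L" if "u \<in> U" for u
      unfolding p_def using someI_ex[OF Uex[OF that]] .
    define g' where "g' u = (if u \<in> U then g (p u) else g u)" for u
    have LU: "\<And>l. l \<in> L \<Longrightarrow> l \<notin> U" unfolding U_def by auto
    have Ln: "\<And>l. l \<in> L \<Longrightarrow> l < n" unfolding L_def by auto
    have nb: "g' ` {..<n} = g ` {..<n}"
    proof
      show "g' ` {..<n} \<subseteq> g ` {..<n}"
      proof
        fix y assume "y \<in> g' ` {..<n}"
        then obtain u where u: "u < n" "y = g' u" by auto
        show "y \<in> g ` {..<n}"
        proof (cases "u \<in> U")
          case True then show ?thesis using u pU[OF True] unfolding g'_def by auto
        next
          case False then show ?thesis using u unfolding g'_def by auto
        qed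
      qed
      show "g ` {..<n} \<subseteq> g' ` {..<n}"
      proof
        fix y assume "y \<in> g ` {..<n}"
        then obtain u where u: "u < n" "y = g u" by auto
        show "y \<in> g' ` {..<n}"
        proof (cases "u \<in> U")
          case True
          then obtain l where l: "l \<in> L" "g u = g l" unfolding U_def by blast
          have "g' l = g l" using LU[OF l(1)] unfolding g'_def by simp
          then have "y = g' l" using u l by simp
          then show ?thesis using Ln[OF l(1)] by simp
        next
          case False
          then have "y = g' u" using u unfolding g'_def by simp
          then show ?thesis using u by simp
        qed
      qed
    qed
    have asg: "is_assignment a g'"
      unfolding is_assignment_def
    proof
      fix j
      show "(\<Sum>i\<in>{i. i < length a \<and> g' i = j}. a!i) \<le> 1"
      proof (cases "\<exists>l\<in>L. g l = j")
        case True
        then obtain l where l: "l \<in> L" "g l = j" by blast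
        have "{i. i < length a \<and> g' i = j} \<subseteq> {i. i < length a \<and> f i = f l}"
        proof (rule subsetI)
          fix i assume "i \<in> {i. i < length a \<and> g' i = j}"
          then have i: "i < length a" "g' i = j" by auto
          have "f i = f l"
          proof (cases "i \<in> U")
            case True
            then have "g (p i) = g l" using i l unfolding g'_def by simp
            then have "p i = l" using Ldist pU[OF True] l by blast
            then show ?thesis using pU[OF True] by simp
          next
            case False
            then have "g i = g l" using i l unfolding g'_def by simp
            then have "i \<in> L" using False l i unfolding U_def n_def by blast
            then have "i = l" using Ldist \<open>g i = g l\<close> l by blast
            then show ?thesis by simp
          qed
          then show "i \<in> {i. i < length a \<and> f i = f l}" using i by simp
        qed
        moreover have "(\<Sum>i\<in>{i. i < length a \<and> f i = f l}. a!i) \<le> 1"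
          using good unfolding mmgood_def is_assignment_def by blast
        ultimately show ?thesis by (rule sum_sub_le[OF srt])
      next
        case False
        have "{i. i < length a \<and> g' i = j} \<subseteq> {i. i < length a \<and> g i = j}"
        proof (rule subsetI)
          fix i assume "i \<in> {i. i < length a \<and> g' i = j}"
          then have i: "i < length a" "g' i = j" by auto
          have "i \<notin> U"
          proof
            assume "i \<in> U"
            then have "g (p i) = j" using i unfolding g'_def by simp
            then show False using False pU[OF \<open>i \<in> U\<close>] by blast
          qed
          then show "i \<in> {i. i < length a \<and> g i = j}" using i unfolding g'_def by simp
        qed
        moreover have "(\<Sum>i\<in>{i. i < length a \<and> g i = j}. a!i) \<le> 1"
          using gA unfolding is_assignment_def by blast
        ultimately show ?thesis by (rule sum_sub_le[OF srt])
      qed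
    qed
    have sl: "sole a g' i" if i: "i < length a" "class1 a i" "sole a (MM 2 a) i" for i
    proof -
      have iSC: "i \<in> SC" using i unfolding SC_def f_def n_def by auto
      have iL: "i \<in> L" using mmin[OF iSC] i unfolding L_def n_def by auto
      have g'i: "g' i = g i" using LU[OF iL] unfolding g'_def by simp
      show ?thesis unfolding sole_def
      proof (intro allI impI)
        fix i' assume i': "i' < length a" "i' \<noteq> i"
        show "g' i' \<noteq> g' i"
        proof (cases "i' \<in> U")
          case True
          show ?thesis
          proof
            assume "g' i' = g' i"
            then have "g (p i') = g i" using True g'i unfolding g'_def by simp
            then have "p i' = i" using Ldist pU[OF True] iL by blast
            then have "f i' = f i" using pU[OF True] by simp
            then show False using i(3) i' unfolding sole_def f_def by auto
          qed
        next
          case False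
          show ?thesis
          proof
            assume "g' i' = g' i"
            then have "g i' = g i" using False g'i unfolding g'_def by simp
            then have "i' \<in> L" using False iL i' unfolding U_def n_def by blast
            then show False using Ldist \<open>g i' = g i\<close> iL i' by blast
          qed
        qed
      qed
    qed
    have nb': "num_bins a g' = num_bins a g" unfolding num_bins_def using nb unfolding n_def by simp
    have sl': "\<forall>i<length a. class1 a i \<and> sole a (MM 2 a) i \<longrightarrow> sole a g' i" using sl by blast
    show ?thesis using asg nb' sl' by blast
  qed
qed


end
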